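(* Let $X,Y$ be metric spaces and $n\ge1$, and let $f:X\multimap Y$ be a $\{1,n\}$-valued map. Then there is a continuous map $g:X\to\mathit{SP}^n(Y)$ with $u\circ g=f$; namely $g(x)=[y,\dots,y]$ if $f(x)=\{y\}$ and $g(x)=[y_1,\dots,y_n]$ if $f(x)=\{y_1,\dots,y_n\}$.
   Context: An at-most-$n$-valued map $f:X\multimap Y$ is a lower and upper semicontinuous multivalued map whose values are nonempty sets of cardinality at most $n$; it is $\{1,n\}$-valued if $\#f(x)\in\{1,n\}$ for every $x$. $\mathit{SP}^n(Y)$ is the quotient of $Y^n$ by the symmetric group permuting coordinates, with elements $[y_1,\dots,y_n]$; $u:\mathit{SP}^n(Y)\to C_n(Y)$, $u([y_1,\dots,y_n])=\{y_1,\dots,y_n\}$, with $C_n(Y)$ the space of nonempty subsets of cardinality at most $n$ (quotient topology from $Y^n$). *)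

theory Defs
  imports "HOL-Analysis.Analysis" "HOL-Library.Multiset"
begin

definition quotient_topology :: "'a topology \<Rightarrow> ('a \<Rightarrow> 'b) \<Rightarrow> 'b topology" where
  "quotient_topology T q =
     topology (\<lambda>U. U \<subseteq> q ` topspace T \<and> openin T {x \<in> topspace T. q x \<in> U})"

lemma istopology_quotient:
  "istopology (\<lambda>U. U \<subseteq> q ` topspace T \<and> openin T {x \<in> topspace T. q x \<in> U})"
  unfolding istopology_def
proof (rule conjI; intro allI impI)
  fix S1 S2
  assume a: "S1 \<subseteq> q ` topspace T \<and> openin T {x \<in> topspace T. q x \<in> S1}"
     and b: "S2 \<subseteq> q ` topspace T \<and> openin T {x \<in> topspace T. q x \<in> S2}"
  have e: "{x \<in> topspace T. q x \<in> S1 \<inter> S2} =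
        {x \<in> topspace T. q x \<in> S1} \<inter> {x \<in> topspace T. q x \<in> S2}" by auto
  show "S1 \<inter> S2 \<subseteq> q ` topspace T \<and> openin T {x \<in> topspace T. q x \<in> S1 \<inter> S2}"
  proof
    show "S1 \<inter> S2 \<subseteq> q ` topspace T" using a by blast
    show "openin T {x \<in> topspace T. q x \<in> S1 \<inter> S2}"
      unfolding e using a b by (intro openin_Int) auto
  qed
next
  fix K
  assume a: "\<forall>S\<in>K. S \<subseteq> q ` topspace T \<and> openin T {x \<in> topspace T. q x \<in> S}"
  have e: "{x \<in> topspace T. q x \<in> \<Union>K} = (\<Union>S\<in>K. {x \<in> topspace T. q x \<in> S})" by auto
  show "\<Union>K \<subseteq> q ` topspace T \<and> openin T {x \<in> topspace T. q x \<in> \<Union>K}"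
  proof
    show "\<Union>K \<subseteq> q ` topspace T" using a by blast
    show "openin T {x \<in> topspace T. q x \<in> \<Union>K}"
      unfolding e using a by (intro openin_Union) auto
  qed
qed

lemma openin_quotient_topology:
  "openin (quotient_topology T q) U \<longleftrightarrow>
     U \<subseteq> q ` topspace T \<and> openin T {x \<in> topspace T. q x \<in> U}"
  unfolding quotient_topology_def topology_inverse'[OF istopology_quotient] by (rule refl)

text \<open>The n-th symmetric product SP^n(Y): the quotient of Y^n (product topology on
  functions {..<n} \<rightarrow> Y) by the map (y_0,...,y_{n-1}) \<mapsto> [y_0,...,y_{n-1}],
  unordered n-tuples being represented as multisets of size n.\<close>
definition sym_prod_map :: "nat \<Rightarrow> (nat \<Rightarrow> 'b) \<Rightarrow> 'b multiset" where
  "sym_prod_map n y = image_mset y (mset_set {..<n})"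

definition SP :: "nat \<Rightarrow> 'b topology \<Rightarrow> 'b multiset topology" where
  "SP n Y = quotient_topology (product_topology (\<lambda>_. Y) {..<n}) (sym_prod_map n)"

definition u_map :: "'b multiset \<Rightarrow> 'b set" where
  "u_map M = set_mset M"

definition upper_semicontinuous_mv :: "('a::topological_space \<Rightarrow> 'b::topological_space set) \<Rightarrow> bool" where
  "upper_semicontinuous_mv f \<longleftrightarrow> (\<forall>V. open V \<longrightarrow> open {x. f x \<subseteq> V})"

definition lower_semicontinuous_mv :: "('a::topological_space \<Rightarrow> 'b::topological_space set) \<Rightarrow> bool" where
  "lower_semicontinuous_mv f \<longleftrightarrow> (\<forall>V. open V \<longrightarrow> open {x. f x \<inter> V \<noteq> {}})"

definition one_n_valued :: "nat \<Rightarrow> ('a::topological_space \<Rightarrow> 'b::topological_space set) \<Rightarrow> bool" where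
  "one_n_valued n f \<longleftrightarrow> upper_semicontinuous_mv f \<and> lower_semicontinuous_mv f \<and>
     (\<forall>x. finite (f x) \<and> f x \<noteq> {} \<and> card (f x) \<le> n \<and> (card (f x) = 1 \<or> card (f x) = n))"

end

theory Submission
  imports Defs
begin

lemma finite_pos_min:
  assumes "finite I" "\<forall>i\<in>I. \<exists>r>0. P i r"
    and mono: "\<And>i r s. P i r \<Longrightarrow> 0 < s \<Longrightarrow> s \<le> r \<Longrightarrow> P i s"
  shows "\<exists>r>(0::real). \<forall>i\<in>I. P i r"
  using assms(1,2)
proof (induction I rule: finite_induct)
  case empty then show ?case by (intro exI[of _ 1]) auto
next
  case (insert a F)
  then obtain r1 where r1: "r1 > 0" "P a r1" by auto
  from insert obtain r2 where r2: "r2 > 0" "\<forall>i\<in>F. P i r2" by auto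
  show ?case
    apply (rule exI[of _ "min r1 r2"])
    using r1 r2 mono by auto
qed

lemma topspace_quotient_topology:
  "topspace (quotient_topology T q) = q ` topspace T"
proof -
  have "openin (quotient_topology T q) (q ` topspace T)"
    unfolding openin_quotient_topology by (auto intro: arg_cong[where f="openin T", THEN iffD1, OF _ openin_topspace])
  moreover have "\<And>U. openin (quotient_topology T q) U \<Longrightarrow> U \<subseteq> q ` topspace T"
    unfolding openin_quotient_topology by auto
  ultimately show ?thesis unfolding topspace_def by blast
qed

definition gmap :: "nat \<Rightarrow> ('a \<Rightarrow> 'b set) \<Rightarrow> 'a \<Rightarrow> 'b multiset" where
  "gmap n f x = (if card (f x) = 1 then replicate_mset n (the_elem (f x)) else mset_set (f x))"

lemma sym_prod_const:
  "sym_prod_map n (restrict (\<lambda>_. y) {..<n}) = replicate_mset n y"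
proof -
  have "image_mset (restrict (\<lambda>_. y) {..<n}) (mset_set {..<n}) = image_mset (\<lambda>_. y) (mset_set {..<n})"
    by (rule image_mset_cong) auto
  then show ?thesis unfolding sym_prod_map_def by (simp add: image_mset_const_eq)
qed

lemma sym_prod_inj:
  assumes "inj_on z {..<n}"
  shows "sym_prod_map n (restrict z {..<n}) = mset_set (z ` {..<n})"
proof -
  have "image_mset (restrict z {..<n}) (mset_set {..<n}) = image_mset z (mset_set {..<n})"
    by (rule image_mset_cong) auto
  then show ?thesis unfolding sym_prod_map_def using image_mset_mset_set[OF assms] by simp
qed

lemma rep:
  assumes "n \<ge> 1" "finite (f x)" "f x \<noteq> {}" "card (f x) = 1 \<or> card (f x) = n"
  shows "\<exists>z\<in>PiE {..<n} (\<lambda>_. UNIV). sym_prod_map n z = gmap n f x \<and> z ` {..<n} = f x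
     \<and> (card (f x) \<noteq> 1 \<longrightarrow> inj_on z {..<n})
     \<and> (card (f x) = 1 \<longrightarrow> (\<forall>i<n. z i = the_elem (f x)))"
proof (cases "card (f x) = 1")
  case True
  then obtain y where y: "f x = {y}" using card_1_singletonE by blast
  show ?thesis
    apply (rule bexI[of _ "restrict (\<lambda>_. y) {..<n}"])
    using True y assms(1) by (auto simp: gmap_def sym_prod_const image_iff Suc_le_eq)
next
  case False
  then have c: "card (f x) = n" using assms by auto
  obtain h where h: "bij_betw h {0..<card (f x)} (f x)" using ex_bij_betw_nat_finite assms(2) by blast
  then have hi: "inj_on h {..<n}" "h ` {..<n} = f x" using c
    by (auto simp: bij_betw_def lessThan_atLeast0)
  show ?thesis
    apply (rule bexI[of _ "restrict h {..<n}"])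
    using False hi sym_prod_inj[OF hi(1)] by (auto simp: gmap_def inj_on_def)
qed

lemma box_nbhd:
  fixes z0 :: "nat \<Rightarrow> 'b::metric_space"
  assumes "openin (product_topology (\<lambda>_. euclidean) {..<n}) W" "z0 \<in> W"
  shows "\<exists>r>0. \<forall>z\<in>PiE {..<n} (\<lambda>_. UNIV). (\<forall>i<n. dist (z i) (z0 i) < r) \<longrightarrow> z \<in> W"
proof -
  obtain U where U: "\<forall>i\<in>{..<n}. openin euclidean (U i)" "z0 \<in> PiE {..<n} U" "PiE {..<n} U \<subseteq> W"
    using assms unfolding openin_product_topology_alt by blast
  have "\<forall>i\<in>{..<n}. \<exists>r>0. ball (z0 i) r \<subseteq> U i"
    using U(1,2) by (auto simp: open_contains_ball PiE_iff)
  then obtain r where r: "r > 0" "\<forall>i\<in>{..<n}. ball (z0 i) r \<subseteq> U i"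
    using finite_pos_min[of "{..<n}" "\<lambda>i r. ball (z0 i) r \<subseteq> U i"] by force
  show ?thesis
  proof (intro exI[of _ r] conjI ballI impI r(1))
    fix z assume z: "z \<in> PiE {..<n} (\<lambda>_. UNIV)" "\<forall>i<n. dist (z i) (z0 i) < r"
    have "z \<in> PiE {..<n} U" using z r(2) by (force simp: PiE_iff dist_commute)
    then show "z \<in> W" using U(3) by blast
  qed
qed

theorem mainTheorem14:
  fixes f :: "'a::metric_space \<Rightarrow> 'b::metric_space set" and n :: nat
  assumes "n \<ge> 1" and "one_n_valued n f"
  shows "\<exists>g. continuous_map euclidean (SP n euclidean) g \<and> (\<forall>x. u_map (g x) = f x)"
proof -
  note A = assms(2)[unfolded one_n_valued_def]
  have U1: "upper_semicontinuous_mv f" and L1: "lower_semicontinuous_mv f" using A by auto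
  have usc: "\<And>V. open V \<Longrightarrow> open {x. f x \<subseteq> V}" using U1[unfolded upper_semicontinuous_mv_def] by blast
  have lsc: "\<And>V. open V \<Longrightarrow> open {x. f x \<inter> V \<noteq> {}}" using L1[unfolded lower_semicontinuous_mv_def] by blast
  have fx: "\<And>x. finite (f x) \<and> f x \<noteq> {} \<and> (card (f x) = 1 \<or> card (f x) = n)" using A by simp
  define q :: "(nat \<Rightarrow> 'b) \<Rightarrow> 'b multiset" where "q = sym_prod_map n"
  define P where "P = product_topology (\<lambda>_. euclidean :: 'b topology) {..<n}"
  have tP: "topspace P = PiE {..<n} (\<lambda>_. UNIV)" unfolding P_def by simp
  have repx: "\<exists>z\<in>PiE {..<n} (\<lambda>_. UNIV). q z = gmap n f x \<and> z ` {..<n} = f x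
     \<and> (card (f x) \<noteq> 1 \<longrightarrow> inj_on z {..<n})
     \<and> (card (f x) = 1 \<longrightarrow> (\<forall>i<n. z i = the_elem (f x)))" for x
    unfolding q_def using fx[of x] by (intro rep[OF assms(1)]) auto
  have u: "u_map (gmap n f x) = f x" for x
  proof (cases "card (f x) = 1")
    case True
    then obtain y where "f x = {y}" using card_1_singletonE by blast
    then show ?thesis using True assms(1) by (simp add: gmap_def u_map_def)
  next
    case False then show ?thesis using fx by (simp add: gmap_def u_map_def)
  qed
  have cont: "continuous_map euclidean (SP n euclidean) (gmap n f)"
    unfolding continuous_map_def
  proof (intro conjI allI impI)
    show "gmap n f \<in> topspace euclidean \<rightarrow> topspace (SP n euclidean)"
    proof -
      have "gmap n f x \<in> q ` PiE {..<n} (\<lambda>_. UNIV)" for x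
      proof -
        obtain z where z: "z \<in> PiE {..<n} (\<lambda>_. UNIV)" "q z = gmap n f x" using repx by blast
        show ?thesis using z by (intro rev_image_eqI[of z]) auto
      qed
      then show ?thesis unfolding q_def by (auto simp: SP_def topspace_quotient_topology)
    qed
  next
    fix U :: "'b multiset set" assume "openin (SP n euclidean) U"
    then have Uo: "openin P {z \<in> topspace P. q z \<in> U}"
      unfolding SP_def openin_quotient_topology P_def q_def by blast
    have "open {x. gmap n f x \<in> U}"
    proof (subst open_subopen, intro ballI)
      fix x0 assume x0: "x0 \<in> {x. gmap n f x \<in> U}"
      obtain z0 where z0: "z0 \<in> PiE {..<n} (\<lambda>_. UNIV)" "q z0 = gmap n f x0" "z0 ` {..<n} = f x0"
        "card (f x0) \<noteq> 1 \<longrightarrow> inj_on z0 {..<n}"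
        "card (f x0) = 1 \<longrightarrow> (\<forall>i<n. z0 i = the_elem (f x0))"
        using repx by blast
      have "z0 \<in> {z \<in> topspace P. q z \<in> U}" using z0 x0 tP by auto
      from box_nbhd[OF Uo[unfolded P_def] this[unfolded P_def]]
      obtain r1 where r1: "r1 > 0" "\<forall>z\<in>PiE {..<n} (\<lambda>_. UNIV). (\<forall>i<n. dist (z i) (z0 i) < r1) \<longrightarrow> q z \<in> U"
        by (auto simp: tP[unfolded P_def])
      have "\<forall>ij\<in>{..<n}\<times>{..<n}. \<exists>r>0. (z0 (fst ij) \<noteq> z0 (snd ij) \<longrightarrow> 2 * r \<le> dist (z0 (fst ij)) (z0 (snd ij)))"
      proof
        fix ij :: "nat \<times> nat"
        show "\<exists>r>0. (z0 (fst ij) \<noteq> z0 (snd ij) \<longrightarrow> 2 * r \<le> dist (z0 (fst ij)) (z0 (snd ij)))"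
        proof (cases "z0 (fst ij) = z0 (snd ij)")
          case True then show ?thesis by (intro exI[of _ 1]) auto
        next
          case False then show ?thesis
            by (intro exI[of _ "dist (z0 (fst ij)) (z0 (snd ij)) / 2"]) auto
        qed
      qed
      then obtain r2 where r2: "r2 > 0" "\<forall>ij\<in>{..<n}\<times>{..<n}. z0 (fst ij) \<noteq> z0 (snd ij) \<longrightarrow> 2 * r2 \<le> dist (z0 (fst ij)) (z0 (snd ij))"
        using finite_pos_min[of "{..<n}\<times>{..<n}" "\<lambda>ij r. z0 (fst ij) \<noteq> z0 (snd ij) \<longrightarrow> 2 * r \<le> dist (z0 (fst ij)) (z0 (snd ij))"]
        by force
      define r where "r = min r1 r2"
      have r: "r > 0" "r \<le> r1" "r \<le> r2" using r1 r2 by (auto simp: r_def)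
      have sep: "\<And>i j. i < n \<Longrightarrow> j < n \<Longrightarrow> z0 i \<noteq> z0 j \<Longrightarrow> 2 * r \<le> dist (z0 i) (z0 j)"
        using r2 r by fastforce
      define N where "N = {x. f x \<subseteq> (\<Union>i<n. ball (z0 i) r)} \<inter> (\<Inter>i<n. {x. f x \<inter> ball (z0 i) r \<noteq> {}})"
      have "open N" unfolding N_def
        by (intro open_Int usc open_INT open_UN ballI lsc open_ball finite_lessThan)
      moreover have "x0 \<in> N"
      proof -
        have a: "\<And>i. i < n \<Longrightarrow> z0 i \<in> f x0 \<inter> ball (z0 i) r" using z0(3) r(1) by auto
        have b: "f x0 \<subseteq> (\<Union>i<n. ball (z0 i) r)"
        proof
          fix y assume "y \<in> f x0"
          then obtain i where "i < n" "y = z0 i" using z0(3) by auto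
          then show "y \<in> (\<Union>i<n. ball (z0 i) r)" using r(1) by (intro UN_I[of i]) auto
        qed
        show ?thesis unfolding N_def using a b by blast
      qed
      moreover have "N \<subseteq> {x. gmap n f x \<in> U}"
      proof
        fix x assume xN: "x \<in> N"
        have sub: "f x \<subseteq> (\<Union>i<n. ball (z0 i) r)" and meet: "\<And>i. i < n \<Longrightarrow> f x \<inter> ball (z0 i) r \<noteq> {}"
          using xN unfolding N_def by auto
        have "\<exists>z\<in>PiE {..<n} (\<lambda>_. UNIV). (\<forall>i<n. dist (z i) (z0 i) < r) \<and> q z = gmap n f x"
        proof (cases "card (f x) = 1")
          case True
          then obtain y where y: "f x = {y}" using card_1_singletonE by blast
          show ?thesis
            apply (rule bexI[of _ "restrict (\<lambda>_. y) {..<n}"])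
            using meet y True by (auto simp: q_def sym_prod_const gmap_def dist_commute)
        next
          case False
          note fx1 = False
          then have cn: "card (f x) = n" using fx by auto
          show ?thesis
          proof (cases "card (f x0) = 1")
            case True
            define y0 where "y0 = the_elem (f x0)"
            have c0: "\<And>i. i < n \<Longrightarrow> z0 i = y0" using z0(5) True unfolding y0_def by auto
            have "f x \<subseteq> ball y0 r"
            proof
              fix y assume "y \<in> f x"
              then obtain i where "i < n" "y \<in> ball (z0 i) r" using sub by blast
              then show "y \<in> ball y0 r" using c0 by metis
            qed
            obtain z where z: "z\<in>PiE {..<n} (\<lambda>_. UNIV)" "q z = gmap n f x" "z ` {..<n} = f x"
              using repx by blast
            have "\<forall>i<n. dist (z i) (z0 i) < r"
            proof (intro allI impI)
              fix i assume i: "i < n"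
              then have "z i \<in> ball y0 r" using z(3) \<open>f x \<subseteq> ball y0 r\<close> by blast
              then show "dist (z i) (z0 i) < r" using c0[OF i] by (simp add: dist_commute)
            qed
            then show ?thesis using z by blast
          next
            case False
            then have inj0: "inj_on z0 {..<n}" using z0(4) by auto
            have "\<forall>i. \<exists>w. i < n \<longrightarrow> w \<in> f x \<inter> ball (z0 i) r" using meet by blast
            then obtain w where w: "\<And>i. i < n \<Longrightarrow> w i \<in> f x \<inter> ball (z0 i) r" by metis
            have injw: "inj_on w {..<n}"
            proof (rule inj_onI)
              fix i j assume ij: "i \<in> {..<n}" "j \<in> {..<n}" "w i = w j"
              have "dist (z0 i) (z0 j) \<le> dist (z0 i) (w i) + dist (w i) (z0 j)" by (rule dist_triangle)
              also have "\<dots> < 2 * r" using w[of i] w[of j] ij by (auto simp: dist_commute)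
              finally have "z0 i = z0 j" using sep[of i j] ij by fastforce
              then show "i = j" using inj0 ij by (auto simp: inj_on_def)
            qed
            have "w ` {..<n} \<subseteq> f x" using w by auto
            moreover have "card (w ` {..<n}) = card (f x)" using card_image[OF injw] cn by simp
            ultimately have img: "w ` {..<n} = f x" using card_subset_eq[of "f x" "w ` {..<n}"] fx by blast
            show ?thesis
              apply (rule bexI[of _ "restrict w {..<n}"])
              using w sym_prod_inj[OF injw] img fx1
              by (auto simp: q_def gmap_def dist_commute)
          qed
        qed
        then obtain z where z: "z\<in>PiE {..<n} (\<lambda>_. UNIV)" "\<forall>i<n. dist (z i) (z0 i) < r" "q z = gmap n f x"
          by blast
        have "\<forall>i<n. dist (z i) (z0 i) < r1" using z(2) r(2) by force
        then have "q z \<in> U" using r1(2) z(1) by blast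
        then show "x \<in> {x. gmap n f x \<in> U}" using z(3) by simp
      qed
      ultimately show "\<exists>T. open T \<and> x0 \<in> T \<and> T \<subseteq> {x. gmap n f x \<in> U}" by blast
    qed
    then show "openin euclidean {x \<in> topspace euclidean. gmap n f x \<in> U}" by simp
  qed
  show ?thesis using cont u by blast
qed

end
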